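(* Let the setting be as in the context and let $A\in\mathcal T^1(\mathcal H)$ be such that $\mathcal F_U(A)\in L^1(\widehat\Xi)$. Then $\mathcal F_U^{-1}(\mathcal F_U(A))=A$, i.e. $\int_{\widehat\Xi}\mathcal F_U(A)(\xi)\,U_\xi\,d\xi=A$.
   Context: $\Xi$ is a locally compact abelian group; $m:\Xi\times\Xi\to S^1$ separately continuous with $m(x+y,z)m(x,y)=m(x,y+z)m(y,z)$, $m(x,0)=m(0,x)=1$, $m(x,y)=m(-x,-y)$, Heisenberg: $\sigma(x,y)=m(x,y)/m(y,x)$ and $x\mapsto\sigma(x,\cdot)$ a topological isomorphism $\Xi\to\widehat\Xi$. $(U_x)$ is the irreducible strongly continuous square integrable projective unitary representation on $\mathcal H$ with $U_xU_y=m(x,y)U_{x+y}$; Haar measure on $\Xi$ normalized so that $\int_\Xi\langle U_x\varphi_1,\psi_1\rangle\overline{\langle U_x\varphi_2,\psi_2\rangle}dx=\langle\varphi_1,\varphi_2\rangle\overline{\langle\psi_1,\psi_2\rangle}$. $\widehat\Xi$ denotes $\Xi$ with Haar measure rescaled so that the symplectic Fourier transform $\mathcal F_\sigma f(\xi)=\int_\Xi\sigma(x,\xi)f(x)dx$ is unitary $L^2(\Xi)\to L^2(\widehat\Xi)$. $\mathcal F_U(A)(\xi)=\operatorname{tr}(AU_\xi^* )$; for $f\in L^1(\widehat\Xi)$, $\mathcal F_U^{-1}(f)=\int_{\widehat\Xi}f(\xi)U_\xi d\xi\in\mathcal L(\mathcal H)$ (strong/weak integral). *)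

theory Defs
  imports "HOL-Analysis.Analysis"
begin

section \<open>Complex Hilbert spaces (explicit complex structure on a real Banach space)\<close>

definition complex_hilbert :: "(complex \<Rightarrow> 'h::banach \<Rightarrow> 'h) \<Rightarrow> ('h \<Rightarrow> 'h \<Rightarrow> complex) \<Rightarrow> bool" where
  "complex_hilbert smul ip \<longleftrightarrow>
     (\<forall>r x. smul (complex_of_real r) x = r *\<^sub>R x) \<and>
     (\<forall>a b x. smul a (smul b x) = smul (a * b) x) \<and>
     (\<forall>a x y. smul a (x + y) = smul a x + smul a y) \<and>
     (\<forall>a b x. smul (a + b) x = smul a x + smul b x) \<and>
     (\<forall>x y z. ip (x + y) z = ip x z + ip y z) \<and>
     (\<forall>a x y. ip (smul a x) y = a * ip x y) \<and>
     (\<forall>x y. ip y x = cnj (ip x y)) \<and>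
     (\<forall>x. ip x x = complex_of_real ((norm x)\<^sup>2))"

definition clinear_op :: "(complex \<Rightarrow> 'h::banach \<Rightarrow> 'h) \<Rightarrow> ('h \<Rightarrow> 'h) \<Rightarrow> bool" where
  "clinear_op smul A \<longleftrightarrow> (\<forall>x y. A (x + y) = A x + A y) \<and> (\<forall>a x. A (smul a x) = smul a (A x))"

definition bounded_op :: "(complex \<Rightarrow> 'h::banach \<Rightarrow> 'h) \<Rightarrow> ('h \<Rightarrow> 'h) \<Rightarrow> bool" where
  "bounded_op smul A \<longleftrightarrow> clinear_op smul A \<and> (\<exists>K. \<forall>x. norm (A x) \<le> K * norm x)"

definition unitary_op :: "(complex \<Rightarrow> 'h::banach \<Rightarrow> 'h) \<Rightarrow> ('h \<Rightarrow> 'h \<Rightarrow> complex) \<Rightarrow> ('h \<Rightarrow> 'h) \<Rightarrow> bool" where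
  "unitary_op smul ip A \<longleftrightarrow> clinear_op smul A \<and> surj A \<and> (\<forall>x y. ip (A x) (A y) = ip x y)"

definition adjoint_op :: "('h \<Rightarrow> 'h \<Rightarrow> complex) \<Rightarrow> ('h \<Rightarrow> 'h) \<Rightarrow> ('h \<Rightarrow> 'h)" where
  "adjoint_op ip A = (\<lambda>y. THE z. \<forall>x. ip (A x) y = ip x z)"

definition orthonormal_basis :: "('h::banach \<Rightarrow> 'h \<Rightarrow> complex) \<Rightarrow> 'h set \<Rightarrow> bool" where
  "orthonormal_basis ip E \<longleftrightarrow>
     (\<forall>e\<in>E. ip e e = 1) \<and> (\<forall>e\<in>E. \<forall>f\<in>E. e \<noteq> f \<longrightarrow> ip e f = 0) \<and>
     (\<forall>x. (\<forall>e\<in>E. ip x e = 0) \<longrightarrow> x = 0)"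

definition hilbert_schmidt :: "(complex \<Rightarrow> 'h::banach \<Rightarrow> 'h) \<Rightarrow> ('h \<Rightarrow> 'h \<Rightarrow> complex) \<Rightarrow> ('h \<Rightarrow> 'h) \<Rightarrow> bool" where
  "hilbert_schmidt smul ip C \<longleftrightarrow> bounded_op smul C \<and>
     (\<exists>E. orthonormal_basis ip E \<and> (\<lambda>e. (norm (C e))\<^sup>2) summable_on E)"

definition trace_class :: "(complex \<Rightarrow> 'h::banach \<Rightarrow> 'h) \<Rightarrow> ('h \<Rightarrow> 'h \<Rightarrow> complex) \<Rightarrow> ('h \<Rightarrow> 'h) \<Rightarrow> bool" where
  "trace_class smul ip A \<longleftrightarrow>
     (\<exists>B C. hilbert_schmidt smul ip B \<and> hilbert_schmidt smul ip C \<and> A = B \<circ> C)"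

definition trace_op :: "('h::banach \<Rightarrow> 'h \<Rightarrow> complex) \<Rightarrow> ('h \<Rightarrow> 'h) \<Rightarrow> complex" where
  "trace_op ip A = infsum (\<lambda>e. ip (A e) e) (SOME E. orthonormal_basis ip E)"

definition closed_csubspace :: "(complex \<Rightarrow> 'h::banach \<Rightarrow> 'h) \<Rightarrow> 'h set \<Rightarrow> bool" where
  "closed_csubspace smul S \<longleftrightarrow> closed S \<and> 0 \<in> S \<and> (\<forall>x\<in>S. \<forall>y\<in>S. x + y \<in> S) \<and>
     (\<forall>a. \<forall>x\<in>S. smul a x \<in> S)"

definition locally_compact_group :: "'x::{topological_ab_group_add, t2_space} itself \<Rightarrow> bool" where
  "locally_compact_group _ \<longleftrightarrow> (\<forall>x::'x. \<exists>U K. open U \<and> compact K \<and> x \<in> U \<and> U \<subseteq> K)"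

definition haar_measure :: "'x::{topological_ab_group_add, t2_space} measure \<Rightarrow> bool" where
  "haar_measure \<mu> \<longleftrightarrow> sets \<mu> = sets borel \<and>
     (\<forall>K. compact K \<longrightarrow> emeasure \<mu> K < \<infinity>) \<and>
     (\<forall>V. open V \<longrightarrow> V \<noteq> {} \<longrightarrow> emeasure \<mu> V > 0) \<and>
     (\<forall>x. \<forall>A \<in> sets borel. emeasure \<mu> ((+) x ` A) = emeasure \<mu> A) \<and>
     (\<forall>A \<in> sets borel. emeasure \<mu> A = (INF V\<in>{V. open V \<and> A \<subseteq> V}. emeasure \<mu> V)) \<and>
     (\<forall>V. open V \<longrightarrow> emeasure \<mu> V = (SUP K\<in>{K. compact K \<and> K \<subseteq> V}. emeasure \<mu> K))"

definition characters :: "('x::topological_ab_group_add \<Rightarrow> complex) set" where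
  "characters = {ch. continuous_on UNIV ch \<and> (\<forall>x. cmod (ch x) = 1) \<and> (\<forall>x y. ch (x + y) = ch x * ch y)}"

text \<open>Compact-open topology (= topology of uniform convergence on compacta) on the dual group.\<close>
definition dual_topology :: "('x::topological_ab_group_add \<Rightarrow> complex) topology" where
  "dual_topology = topology (\<lambda>W. W \<subseteq> characters \<and>
     (\<forall>ch0\<in>W. \<exists>K e. compact K \<and> e > 0 \<and>
        {ch\<in>characters. \<forall>x\<in>K. cmod (ch x - ch0 x) < e} \<subseteq> W))"

definition multiplier :: "('x::topological_ab_group_add \<Rightarrow> 'x \<Rightarrow> complex) \<Rightarrow> bool" where
  "multiplier m \<longleftrightarrow> (\<forall>x y. cmod (m x y) = 1) \<and>
     (\<forall>x. continuous_on UNIV (m x)) \<and> (\<forall>y. continuous_on UNIV (\<lambda>x. m x y)) \<and>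
     (\<forall>x y z. m (x + y) z * m x y = m x (y + z) * m y z) \<and>
     (\<forall>x. m x 0 = 1 \<and> m 0 x = 1) \<and>
     (\<forall>x y. m x y = m (- x) (- y))"

definition sympl :: "('x \<Rightarrow> 'x \<Rightarrow> complex) \<Rightarrow> 'x \<Rightarrow> 'x \<Rightarrow> complex" where
  "sympl m x y = m x y / m y x"

definition heisenberg :: "('x::topological_ab_group_add \<Rightarrow> 'x \<Rightarrow> complex) \<Rightarrow> bool" where
  "heisenberg m \<longleftrightarrow> (\<forall>x y. sympl m (x + y) = (\<lambda>z. sympl m x z * sympl m y z)) \<and>
     homeomorphic_map euclidean dual_topology (sympl m)"

definition sympl_fourier :: "('x \<Rightarrow> 'x \<Rightarrow> complex) \<Rightarrow> 'x measure \<Rightarrow> ('x \<Rightarrow> complex) \<Rightarrow> 'x \<Rightarrow> complex" where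
  "sympl_fourier m \<mu> f = (\<lambda>\<xi>. \<integral>x. sympl m x \<xi> * f x \<partial>\<mu>)"

definition square_integrable :: "'x measure \<Rightarrow> ('x \<Rightarrow> complex) \<Rightarrow> bool" where
  "square_integrable \<mu> f \<longleftrightarrow> f \<in> borel_measurable \<mu> \<and> integrable \<mu> (\<lambda>x. (cmod (f x))\<^sup>2)"

definition fourier_U :: "('h::banach \<Rightarrow> 'h \<Rightarrow> complex) \<Rightarrow> ('x \<Rightarrow> 'h \<Rightarrow> 'h) \<Rightarrow> ('h \<Rightarrow> 'h) \<Rightarrow> 'x \<Rightarrow> complex" where
  "fourier_U ip U A = (\<lambda>\<xi>. trace_op ip (A \<circ> adjoint_op ip (U \<xi>)))"

text \<open>\<open>\<F>\<^sub>U\<^sup>-\<^sup>1(f) = \<integral> f(\<xi>) U\<^sub>\<xi> d\<xi>\<close> as a weak operator integral: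
  the operator \<open>B\<close> with \<open>\<langle>B\<phi>,\<psi>\<rangle> = \<integral> f(\<xi>) \<langle>U\<^sub>\<xi>\<phi>,\<psi>\<rangle> d\<xi>\<close>.\<close>
definition inv_fourier_U :: "('h::banach \<Rightarrow> 'h \<Rightarrow> complex) \<Rightarrow> 'x measure \<Rightarrow> ('x \<Rightarrow> 'h \<Rightarrow> 'h) \<Rightarrow> ('x \<Rightarrow> complex) \<Rightarrow> 'h \<Rightarrow> 'h" where
  "inv_fourier_U ip \<nu> U f = (\<lambda>\<phi>. THE v. \<forall>\<psi>. ip v \<psi> = (\<integral>\<xi>. f \<xi> * ip (U \<xi> \<phi>) \<psi> \<partial>\<nu>))"

end

theory Submission
  imports Defs
begin


locale chs =
  fixes smul :: "complex \<Rightarrow> 'h::banach \<Rightarrow> 'h" and ip :: "'h \<Rightarrow> 'h \<Rightarrow> complex"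
  assumes H: "complex_hilbert smul ip"
begin

lemma smul_real: "smul (complex_of_real r) x = r *\<^sub>R x" using H unfolding complex_hilbert_def by blast
lemma smul_smul: "smul a (smul b x) = smul (a * b) x" using H unfolding complex_hilbert_def by blast
lemma smul_add: "smul a (x + y) = smul a x + smul a y" using H unfolding complex_hilbert_def by blast
lemma smul_add2: "smul (a + b) x = smul a x + smul b x" using H unfolding complex_hilbert_def by blast
lemma ip_add: "ip (x + y) z = ip x z + ip y z" using H unfolding complex_hilbert_def by blast
lemma ip_smul: "ip (smul a x) y = a * ip x y" using H unfolding complex_hilbert_def by blast
lemma ip_cnj: "ip y x = cnj (ip x y)" using H unfolding complex_hilbert_def by blast
lemma ip_self: "ip x x = complex_of_real ((norm x)\<^sup>2)" using H unfolding complex_hilbert_def by blast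

lemma ip_add2: "ip z (x + y) = ip z x + ip z y"
  by (metis ip_cnj ip_add complex_cnj_add)
lemma ip_smul2: "ip x (smul a y) = cnj a * ip x y"
  by (metis ip_cnj ip_smul complex_cnj_mult)
lemma ip_zero[simp]: "ip 0 y = 0"
proof -
  have "ip (0+0) y = ip 0 y + ip 0 y" by (rule ip_add)
  then show ?thesis by simp
qed
lemma ip_zero2[simp]: "ip y 0 = 0" by (metis ip_cnj ip_zero complex_cnj_zero)
lemma ip_minus: "ip (- x) y = - ip x y"
  by (metis add_eq_0_iff ip_add ip_zero neg_eq_iff_add_eq_0)
lemma ip_diff: "ip (x - y) z = ip x z - ip y z"
  by (metis diff_conv_add_uminus ip_add ip_minus)
lemma ip_minus2: "ip y (- x) = - ip y x" by (metis ip_cnj ip_minus complex_cnj_minus)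
lemma ip_diff2: "ip z (x - y) = ip z x - ip z y" by (metis ip_cnj ip_diff complex_cnj_diff)
lemma ip_scaleR: "ip (r *\<^sub>R x) y = of_real r * ip x y" by (metis smul_real ip_smul)
lemma ip_scaleR2: "ip y (r *\<^sub>R x) = of_real r * ip y x" by (metis ip_cnj ip_scaleR complex_cnj_mult complex_cnj_complex_of_real)
lemma ip_sum: "ip (\<Sum>i\<in>I. f i) y = (\<Sum>i\<in>I. ip (f i) y)"
  by (induction I rule: infinite_finite_induct) (auto simp: ip_add)
lemma ip_sum2: "ip y (\<Sum>i\<in>I. f i) = (\<Sum>i\<in>I. ip y (f i))"
  by (induction I rule: infinite_finite_induct) (auto simp: ip_add2)
lemma smul_zero[simp]: "smul a 0 = 0"
proof -
  have "smul a (0+0) = smul a 0 + smul a 0" by (rule smul_add)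
  then show ?thesis by simp
qed
lemma smul_zero2[simp]: "smul 0 x = 0" using smul_real[of 0 x] by simp
lemma smul_one[simp]: "smul 1 x = x" using smul_real[of 1 x] by simp
lemma smul_sum: "smul a (\<Sum>i\<in>I. f i) = (\<Sum>i\<in>I. smul a (f i))"
  by (induction I rule: infinite_finite_induct) (auto simp: smul_add)
lemma smul_minus: "smul a (- x) = - smul a x"
  by (metis add_eq_0_iff smul_add smul_zero neg_eq_iff_add_eq_0)
lemma smul_diff: "smul a (x - y) = smul a x - smul a y"
  by (metis diff_conv_add_uminus smul_add smul_minus)

lemma ip_self_re: "Re (ip x x) = (norm x)\<^sup>2" by (simp add: ip_self)
lemma ip_eq_zero: assumes "\<And>y. ip x y = 0" shows "x = 0"
  using assms[of x] ip_self[of x] by simp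
lemma ip_ext: assumes "\<And>y. ip x y = ip z y" shows "x = z"
  using ip_eq_zero[of "x - z"] assms by (simp add: ip_diff)

lemma norm_add_sq: "(norm (x + y))\<^sup>2 = (norm x)\<^sup>2 + 2 * Re (ip x y) + (norm y)\<^sup>2"
proof -
  have "ip (x+y) (x+y) = ip x x + ip x y + (ip y x + ip y y)"
    by (simp add: ip_add ip_add2)
  then have "Re (ip (x+y) (x+y)) = Re (ip x x) + Re (ip x y) + (Re (ip y x) + Re (ip y y))"
    by simp
  moreover have "Re (ip y x) = Re (ip x y)" by (subst ip_cnj) simp
  ultimately show ?thesis by (simp add: ip_self_re)
qed

lemma re_cs: "Re (ip x y) \<le> norm x * norm y"
proof (cases "y = 0")
  case True then show ?thesis by simp
next
  case False
  then have ny: "norm y > 0" by simp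
  define t where "t = - Re (ip x y) / (norm y)\<^sup>2"
  have "0 \<le> (norm (x + t *\<^sub>R y))\<^sup>2" by simp
  also have "\<dots> = (norm x)\<^sup>2 + 2 * t * Re (ip x y) + t\<^sup>2 * (norm y)\<^sup>2"
    by (simp add: norm_add_sq ip_scaleR2 power_mult_distrib)
  also have "\<dots> = (norm x)\<^sup>2 - (Re (ip x y))\<^sup>2 / (norm y)\<^sup>2"
    using ny by (simp add: t_def field_simps power2_eq_square)
  finally have "(Re (ip x y))\<^sup>2 \<le> (norm x * norm y)\<^sup>2"
    using ny by (simp add: field_simps power_mult_distrib)
  then have "\<bar>Re (ip x y)\<bar> \<le> norm x * norm y"
    by (metis abs_le_square_iff abs_of_nonneg mult_nonneg_nonneg norm_ge_zero)
  then show ?thesis by simp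
qed

lemma norm_smul: "norm (smul a x) = cmod a * norm x"
proof -
  have "ip (smul a x) (smul a x) = (a * cnj a) * ip x x"
    by (simp add: ip_smul ip_smul2)
  also have "\<dots> = complex_of_real ((cmod a)\<^sup>2 * (norm x)\<^sup>2)"
    by (simp only: complex_norm_square[symmetric] ip_self of_real_mult)
  finally have "Re (ip (smul a x) (smul a x)) = (cmod a)\<^sup>2 * Re (ip x x)"
    by (simp add: ip_self)
  then have "(norm (smul a x))\<^sup>2 = (cmod a * norm x)\<^sup>2" by (simp add: ip_self_re power_mult_distrib)
  then show ?thesis by (simp add: power2_eq_iff_nonneg)
qed

lemma cs: "cmod (ip x y) \<le> norm x * norm y"
proof (cases "ip x y = 0")
  case True then show ?thesis by simp
next
  case False
  define a where "a = cnj (ip x y) / cmod (ip x y)"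
  have ca: "cmod a = 1" using False by (simp add: a_def norm_divide)
  have "ip (smul a x) y = (cnj (ip x y) * ip x y) / cmod (ip x y)"
    by (simp add: ip_smul a_def)
  also have "\<dots> = complex_of_real (cmod (ip x y))"
    using False by (simp add: complex_norm_square[symmetric] mult.commute power2_eq_square)
  finally have "ip (smul a x) y = complex_of_real (cmod (ip x y))" .
  then have "cmod (ip x y) = Re (ip (smul a x) y)" by simp
  also have "\<dots> \<le> norm (smul a x) * norm y" by (rule re_cs)
  finally show ?thesis by (simp add: norm_smul ca)
qed

end


context chs begin

lemma mult_cnj_self: "a * cnj a = complex_of_real ((cmod a)\<^sup>2)"
  by (simp only: complex_norm_square)
lemma cnj_mult_self: "cnj a * a = complex_of_real ((cmod a)\<^sup>2)"
  by (subst mult.commute) (rule mult_cnj_self)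

lemma bl_ip1: "bounded_linear (\<lambda>v. ip v z)"
proof (rule bounded_linear_intro[where K="norm z"])
  show "ip (x + y) z = ip x z + ip y z" for x y by (rule ip_add)
  show "ip (r *\<^sub>R x) z = r *\<^sub>R ip x z" for r x by (simp add: ip_scaleR scaleR_conv_of_real)
  show "norm (ip x z) \<le> norm x * norm z" for x by (rule cs)
qed

lemma bl_ip2: "bounded_linear (\<lambda>v. ip z v)"
proof (rule bounded_linear_intro[where K="norm z"])
  show "ip z (x + y) = ip z x + ip z y" for x y by (rule ip_add2)
  show "ip z (r *\<^sub>R x) = r *\<^sub>R ip z x" for r x by (simp add: ip_scaleR2 scaleR_conv_of_real)
  show "norm (ip z x) \<le> norm x * norm z" for x using cs[of z x] by (simp add: mult.commute)
qed

definition orthonormal :: "'h set \<Rightarrow> bool" where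
  "orthonormal E \<longleftrightarrow> (\<forall>e\<in>E. ip e e = 1) \<and> (\<forall>e\<in>E. \<forall>f\<in>E. e \<noteq> f \<longrightarrow> ip e f = 0)"

lemma onb_orthonormal: "orthonormal_basis ip E \<Longrightarrow> orthonormal E"
  unfolding orthonormal_basis_def orthonormal_def by (elim conjE) (intro conjI; assumption)

lemma onb_complete:
  assumes "orthonormal_basis ip E" "\<And>e. e \<in> E \<Longrightarrow> ip x e = 0" shows "x = 0"
proof -
  from assms(1) have "\<forall>x. (\<forall>e\<in>E. ip x e = 0) \<longrightarrow> x = 0"
    unfolding orthonormal_basis_def by (elim conjE) assumption
  then show ?thesis using assms(2) by simp
qed

lemma ip_orth_sum:
  assumes "orthonormal E" "finite F" "F \<subseteq> E" "f \<in> E"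
  shows "ip (\<Sum>e\<in>F. smul (c e) e) f = (if f \<in> F then c f else 0)"
proof -
  have "ip (\<Sum>e\<in>F. smul (c e) e) f = (\<Sum>e\<in>F. c e * ip e f)"
    by (simp add: ip_sum ip_smul)
  also have "\<dots> = (\<Sum>e\<in>F. if e = f then c e else 0)"
    using assms unfolding orthonormal_def by (intro sum.cong) auto
  also have "\<dots> = (if f \<in> F then c f else 0)"
    using assms(2) by (simp add: sum.delta')
  finally show ?thesis .
qed

lemma ip_orth_sum2:
  assumes "orthonormal E" "finite F" "F \<subseteq> E" "f \<in> E"
  shows "ip f (\<Sum>e\<in>F. smul (c e) e) = (if f \<in> F then cnj (c f) else 0)"
  using ip_orth_sum[OF assms, of c] by (subst ip_cnj) auto

lemma norm_orth_sum:
  assumes "orthonormal E" "finite F" "F \<subseteq> E"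
  shows "(norm (\<Sum>e\<in>F. smul (c e) e))\<^sup>2 = (\<Sum>e\<in>F. (cmod (c e))\<^sup>2)"
proof -
  define v where "v = (\<Sum>e\<in>F. smul (c e) e)"
  have gen: "ip (\<Sum>e\<in>F. smul (c e) e) w = (\<Sum>e\<in>F. c e * ip e w)" for w
    by (simp add: ip_sum ip_smul)
  have "ip v v = (\<Sum>e\<in>F. c e * ip e v)"
    using gen[of v] unfolding v_def by simp
  also have "\<dots> = (\<Sum>e\<in>F. c e * cnj (c e))"
  proof (intro sum.cong refl)
    fix e assume "e \<in> F"
    then have "e \<in> E" using assms by auto
    then show "c e * ip e v = c e * cnj (c e)"
      using ip_orth_sum2[OF assms(1-3) \<open>e \<in> E\<close>] \<open>e \<in> F\<close> by (simp add: v_def)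
  qed
  also have "\<dots> = (\<Sum>e\<in>F. complex_of_real ((cmod (c e))\<^sup>2))"
    by (simp only: mult_cnj_self)
  finally have "ip v v = complex_of_real (\<Sum>e\<in>F. (cmod (c e))\<^sup>2)" by (simp only: of_real_sum)
  then have "complex_of_real ((norm v)\<^sup>2) = complex_of_real (\<Sum>e\<in>F. (cmod (c e))\<^sup>2)"
    by (simp only: ip_self)
  then have "(norm v)\<^sup>2 = (\<Sum>e\<in>F. (cmod (c e))\<^sup>2)" by (simp only: of_real_eq_iff)
  then show ?thesis by (simp only: v_def)
qed

lemma bessel_finite:
  assumes "orthonormal E" "finite F" "F \<subseteq> E"
  shows "(\<Sum>e\<in>F. (cmod (ip x e))\<^sup>2) \<le> (norm x)\<^sup>2"
proof -
  define v where "v = (\<Sum>e\<in>F. smul (ip x e) e)"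
  define S where "S = (\<Sum>e\<in>F. (cmod (ip x e))\<^sup>2)"
  have "ip x v = (\<Sum>e\<in>F. cnj (ip x e) * ip x e)"
    by (simp add: v_def ip_sum2 ip_smul2)
  also have "\<dots> = complex_of_real S"
    by (simp only: S_def cnj_mult_self of_real_sum)
  finally have ixv: "ip x v = complex_of_real S" .
  have nv: "(norm v)\<^sup>2 = S" unfolding v_def S_def by (rule norm_orth_sum[OF assms])
  have "0 \<le> (norm (x + - v))\<^sup>2" by simp
  also have "\<dots> = (norm x)\<^sup>2 + 2 * Re (ip x (- v)) + (norm (- v))\<^sup>2"
    by (rule norm_add_sq)
  also have "\<dots> = (norm x)\<^sup>2 - 2 * S + S"
    by (simp only: ip_minus2 ixv nv norm_minus_cancel) simp
  finally show ?thesis unfolding S_def by simp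
qed

lemma bessel_summable:
  assumes "orthonormal E"
  shows "(\<lambda>e. (cmod (ip x e))\<^sup>2) summable_on E"
    and "(\<Sum>\<^sub>\<infinity>e\<in>E. (cmod (ip x e))\<^sup>2) \<le> (norm x)\<^sup>2"
proof -
  show s: "(\<lambda>e. (cmod (ip x e))\<^sup>2) summable_on E"
    by (rule nonneg_bdd_above_summable_on) (auto intro!: bdd_aboveI bessel_finite[OF assms])
  show "(\<Sum>\<^sub>\<infinity>e\<in>E. (cmod (ip x e))\<^sup>2) \<le> (norm x)\<^sup>2"
    by (rule has_sum_le_finite_sums[OF has_sum_infsum[OF s]]) (auto intro: bessel_finite[OF assms])
qed

lemma l2_summable:
  assumes E: "orthonormal E" and w: "(\<lambda>e. (cmod (c e))\<^sup>2) summable_on E"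
  shows "(\<lambda>e. smul (c e) e) summable_on E"
proof -
  define g where "g e = smul (c e) e" for e
  define w where "w e = (cmod (c e))\<^sup>2" for e
  obtain S where hs: "(w has_sum S) E" using w unfolding w_def summable_on_def by blast
  have tail: "\<exists>F0. finite F0 \<and> F0 \<subseteq> E \<and> (\<forall>F. finite F \<and> F0 \<subseteq> F \<and> F \<subseteq> E \<longrightarrow> dist (sum g F) (sum g F0) < d)"
    if "d > 0" for d
  proof -
    have "eventually (\<lambda>F. dist (sum w F) S < d\<^sup>2) (finite_subsets_at_top E)"
      using hs that unfolding has_sum_def by (auto simp: tendsto_iff)
    then obtain F0 where F0all: "finite F0 \<and> F0 \<subseteq> E \<and> (\<forall>F. finite F \<and> F0 \<subseteq> F \<and> F \<subseteq> E \<longrightarrow> dist (sum w F) S < d\<^sup>2)"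
      unfolding eventually_finite_subsets_at_top by blast
    then have F0: "finite F0" "F0 \<subseteq> E"
      and P: "\<And>F. finite F \<Longrightarrow> F0 \<subseteq> F \<Longrightarrow> F \<subseteq> E \<Longrightarrow> dist (sum w F) S < d\<^sup>2" by auto
    have "dist (sum g F) (sum g F0) < d" if F: "finite F" "F0 \<subseteq> F" "F \<subseteq> E" for F
    proof -
      have "dist (sum g F) (sum g F0) = norm (sum g (F - F0))"
        unfolding dist_norm using F by (subst sum_diff) auto
      moreover have "(norm (sum g (F - F0)))\<^sup>2 = sum w (F - F0)"
        unfolding g_def w_def using F by (intro norm_orth_sum[OF E]) auto
      moreover have "sum w F \<le> S"
        using F by (intro finite_sum_le_has_sum[OF hs]) (auto simp: w_def)
      moreover have "sum w (F - F0) = sum w F - sum w F0"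
        using F by (subst sum_diff) auto
      moreover have "S - sum w F0 < d\<^sup>2" using P[of F0] F0 by (auto simp: dist_real_def)
      ultimately have "(dist (sum g F) (sum g F0))\<^sup>2 < d\<^sup>2" by simp
      then show ?thesis using that \<open>d > 0\<close> by (simp add: power_less_imp_less_base less_imp_le)
    qed
    then show ?thesis using F0 by blast
  qed
  have "cauchy_filter (filtermap (sum g) (finite_subsets_at_top E))"
  proof (subst cauchy_filter_metric_filtermap, intro allI impI)
    fix e :: real assume "e > 0"
    then obtain F0 where F0: "finite F0" "F0 \<subseteq> E"
      and P: "\<And>F. finite F \<Longrightarrow> F0 \<subseteq> F \<Longrightarrow> F \<subseteq> E \<Longrightarrow> dist (sum g F) (sum g F0) < e/2"
      using tail[of "e/2"] by auto
    show "\<exists>P. eventually P (finite_subsets_at_top E) \<and> (\<forall>x y. P x \<and> P y \<longrightarrow> dist (sum g x) (sum g y) < e)"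
    proof (intro exI conjI allI impI)
      show "eventually (\<lambda>F. finite F \<and> F0 \<subseteq> F \<and> F \<subseteq> E) (finite_subsets_at_top E)"
        unfolding eventually_finite_subsets_at_top using F0 by blast
      fix x y assume "(finite x \<and> F0 \<subseteq> x \<and> x \<subseteq> E) \<and> (finite y \<and> F0 \<subseteq> y \<and> y \<subseteq> E)"
      then have "dist (sum g x) (sum g F0) < e/2" "dist (sum g y) (sum g F0) < e/2" using P by auto
      then show "dist (sum g x) (sum g y) < e" using dist_triangle2[of "sum g x" "sum g y" "sum g F0"] by linarith
    qed
  qed
  moreover have "complete (UNIV::'h set)"
    by (meson Cauchy_convergent UNIV_I complete_def convergent_def)
  ultimately obtain L where "(sum g \<longlongrightarrow> L) (finite_subsets_at_top E)"
    using complete_uniform[where S=UNIV] by (force simp add: filterlim_def)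
  then show ?thesis unfolding summable_on_def has_sum_def g_def by blast
qed

lemma onb_expansion:
  assumes E: "orthonormal_basis ip E"
  shows "((\<lambda>e. smul (ip x e) e) has_sum x) E"
proof -
  have on: "orthonormal E" using E by (rule onb_orthonormal)
  have sm: "(\<lambda>e. smul (ip x e) e) summable_on E"
    by (rule l2_summable[OF on bessel_summable(1)[OF on]])
  define y where "y = (\<Sum>\<^sub>\<infinity>e\<in>E. smul (ip x e) e)"
  have hy: "((\<lambda>e. smul (ip x e) e) has_sum y) E" using sm unfolding y_def by (rule has_sum_infsum)
  have "ip (x - y) f = 0" if f: "f \<in> E" for f
  proof -
    have "((\<lambda>e. ip (smul (ip x e) e) f) has_sum ip y f) E"
      by (rule has_sum_bounded_linear[OF bl_ip1 hy])
    moreover have "((\<lambda>e. ip (smul (ip x e) e) f) has_sum ip x f) E"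
    proof -
      have "((\<lambda>e. ip (smul (ip x e) e) f) has_sum (ip (smul (ip x f) f) f)) {f}"
        using has_sum_finite[of "{f}"] by simp
      then have "((\<lambda>e. ip (smul (ip x e) e) f) has_sum ip x f) {f}"
        using on f unfolding orthonormal_def by (simp add: ip_smul)
      then show ?thesis
        using on f unfolding orthonormal_def
        by (subst has_sum_cong_neutral[where T="{f}" and g="\<lambda>e. ip (smul (ip x e) e) f"]) (auto simp: ip_smul)
    qed
    ultimately have "ip y f = ip x f" using has_sum_unique by blast
    then show ?thesis by (simp add: ip_diff)
  qed
  then have "x - y = 0" by (rule onb_complete[OF E])
  then show ?thesis using hy by simp
qed

lemma parseval_ip:
  assumes E: "orthonormal_basis ip E"
  shows "((\<lambda>e. ip x e * ip e z) has_sum ip x z) E"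
  using has_sum_bounded_linear[OF bl_ip1[of z] onb_expansion[OF E, of x]] by (simp add: ip_smul)

lemma parseval_norm:
  assumes E: "orthonormal_basis ip E"
  shows "((\<lambda>e. (cmod (ip x e))\<^sup>2) has_sum (norm x)\<^sup>2) E"
proof -
  have "((\<lambda>e. ip x e * ip e x) has_sum ip x x) E" by (rule parseval_ip[OF E])
  then have "((\<lambda>e. complex_of_real ((cmod (ip x e))\<^sup>2)) has_sum complex_of_real ((norm x)\<^sup>2)) E"
    by (subst (asm) (2) ip_cnj) (simp only: ip_self mult_cnj_self)
  then show ?thesis by (simp only: has_sum_of_real_iff)
qed

lemma riesz:
  assumes E: "orthonormal_basis ip E" and l: "bounded_linear l"
    and lsm: "\<And>a x. l (smul a x) = a * l x"
  shows "\<exists>z. \<forall>x. l x = ip x z"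
proof -
  have on: "orthonormal E" using E by (rule onb_orthonormal)
  obtain K where K: "\<And>x. cmod (l x) \<le> norm x * K" "K > 0"
    using bounded_linear.pos_bounded[OF l] by blast
  have fin: "(\<Sum>e\<in>F. (cmod (l e))\<^sup>2) \<le> K\<^sup>2" if F: "finite F" "F \<subseteq> E" for F
  proof -
    define v where "v = (\<Sum>e\<in>F. smul (cnj (l e)) e)"
    define S where "S = (\<Sum>e\<in>F. (cmod (l e))\<^sup>2)"
    have "l v = (\<Sum>e\<in>F. cnj (l e) * l e)"
      unfolding v_def by (simp add: linear_sum[OF bounded_linear.linear[OF l]] lsm)
    also have "\<dots> = complex_of_real S" by (simp only: S_def cnj_mult_self of_real_sum)
    finally have lv: "l v = complex_of_real S" .
    have nv: "(norm v)\<^sup>2 = S" unfolding v_def S_def using norm_orth_sum[OF on F, of "\<lambda>e. cnj (l e)"] by simp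
    have S0: "S \<ge> 0" unfolding S_def by (simp add: sum_nonneg)
    have "S \<le> norm v * K" using K(1)[of v] lv S0 by simp
    then have "S\<^sup>2 \<le> (norm v)\<^sup>2 * K\<^sup>2"
    proof -
      have "S\<^sup>2 \<le> (norm v * K)\<^sup>2" using \<open>S \<le> norm v * K\<close> S0 by (rule power_mono)
      then show ?thesis by (simp add: power_mult_distrib)
    qed
    then have "S * S \<le> S * K\<^sup>2" using nv by (simp add: power2_eq_square)
    then have "S \<le> K\<^sup>2"
    proof (cases "S = 0")
      case True then show ?thesis by simp
    next
      case False then have "S > 0" using S0 by simp
      then show ?thesis using \<open>S * S \<le> S * K\<^sup>2\<close> by (simp add: mult_le_cancel_left_pos)
    qed
    then show ?thesis unfolding S_def .
  qed
  have ws: "(\<lambda>e. (cmod (cnj (l e)))\<^sup>2) summable_on E"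
    by (rule nonneg_bdd_above_summable_on) (auto intro!: bdd_aboveI fin)
  define z where "z = (\<Sum>\<^sub>\<infinity>e\<in>E. smul (cnj (l e)) e)"
  have hz: "((\<lambda>e. smul (cnj (l e)) e) has_sum z) E"
    unfolding z_def by (rule has_sum_infsum[OF l2_summable[OF on ws]])
  have "l x = ip x z" for x
  proof -
    have "((\<lambda>e. ip x (smul (cnj (l e)) e)) has_sum ip x z) E"
      by (rule has_sum_bounded_linear[OF bl_ip2 hz])
    then have 1: "((\<lambda>e. l e * ip x e) has_sum ip x z) E" by (simp add: ip_smul2)
    have "((\<lambda>e. l (smul (ip x e) e)) has_sum l x) E"
      by (rule has_sum_bounded_linear[OF l onb_expansion[OF E]])
    then have 2: "((\<lambda>e. l e * ip x e) has_sum l x) E" by (simp add: lsm mult.commute)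
    show ?thesis using has_sum_unique[OF 2 1] .
  qed
  then show ?thesis by blast
qed

lemma bounded_op_bl:
  assumes "bounded_op smul C" shows "bounded_linear C"
proof -
  from assms obtain K where lin: "clinear_op smul C" and K: "\<And>x. norm (C x) \<le> K * norm x"
    unfolding bounded_op_def by blast
  show ?thesis
  proof (rule bounded_linear_intro[where K=K])
    show "C (x + y) = C x + C y" for x y using lin unfolding clinear_op_def by blast
    show "C (r *\<^sub>R x) = r *\<^sub>R C x" for r x using lin smul_real[of r x] smul_real[of r "C x"] unfolding clinear_op_def by metis
    show "norm (C x) \<le> norm x * K" for x using K[of x] by (simp add: mult.commute)
  qed
qed

lemma adjoint_exists:
  assumes E: "orthonormal_basis ip E" and C: "bounded_op smul C"
  shows "\<exists>z. \<forall>x. ip (C x) y = ip x z"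
proof (rule riesz[OF E])
  show "bounded_linear (\<lambda>x. ip (C x) y)"
    using bounded_linear_compose[OF bl_ip1 bounded_op_bl[OF C]] .
  show "ip (C (smul a x)) y = a * ip (C x) y" for a x
    using C unfolding bounded_op_def clinear_op_def by (simp add: ip_smul)
qed

end


lemma has_sum_finsum:
  fixes g :: "'i \<Rightarrow> 'a \<Rightarrow> 'b::topological_comm_monoid_add"
  assumes "finite F" "\<And>f. f \<in> F \<Longrightarrow> (g f has_sum s f) A"
  shows "((\<lambda>e. \<Sum>f\<in>F. g f e) has_sum (\<Sum>f\<in>F. s f)) A"
  using assms
proof (induction F rule: finite_induct)
  case empty then show ?case by (simp add: has_sum_0)
next
  case (insert x F)
  then show ?case by (simp add: has_sum_add)
qed

lemma cs_finite_sum: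
  fixes a b :: "'i \<Rightarrow> real"
  assumes "\<And>i. a i \<ge> 0" "\<And>i. b i \<ge> 0"
    "(\<Sum>i\<in>F. (a i)\<^sup>2) \<le> A\<^sup>2" "(\<Sum>i\<in>F. (b i)\<^sup>2) \<le> B\<^sup>2" "A \<ge> 0" "B \<ge> 0"
  shows "(\<Sum>i\<in>F. a i * b i) \<le> A * B"
proof -
  have "(\<Sum>i\<in>F. a i * b i)\<^sup>2 \<le> (\<Sum>i\<in>F. (a i)\<^sup>2) * (\<Sum>i\<in>F. (b i)\<^sup>2)"
    by (rule Cauchy_Schwarz_ineq_sum)
  also have "\<dots> \<le> A\<^sup>2 * B\<^sup>2"
    using assms by (intro mult_mono) (auto intro: sum_nonneg)
  also have "\<dots> = (A * B)\<^sup>2" by (simp add: power_mult_distrib)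
  finally show ?thesis
    by (rule power2_le_imp_le) (use assms in simp)
qed

context chs begin

lemma l2_cs:
  assumes E: "orthonormal E"
  shows "(\<lambda>e. cmod (ip a e) * cmod (ip e b)) summable_on E"
    and "(\<Sum>\<^sub>\<infinity>e\<in>E. cmod (ip a e) * cmod (ip e b)) \<le> norm a * norm b"
proof -
  have fin: "(\<Sum>e\<in>F. cmod (ip a e) * cmod (ip e b)) \<le> norm a * norm b" if "finite F" "F \<subseteq> E" for F
  proof (rule cs_finite_sum)
    show "(\<Sum>e\<in>F. (cmod (ip a e))\<^sup>2) \<le> (norm a)\<^sup>2" by (rule bessel_finite[OF E that])
    have "cmod (ip e b) = cmod (ip b e)" for e by (subst ip_cnj) simp
    then show "(\<Sum>e\<in>F. (cmod (ip e b))\<^sup>2) \<le> (norm b)\<^sup>2" using bessel_finite[OF E that, of b] by simp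
  qed auto
  show s: "(\<lambda>e. cmod (ip a e) * cmod (ip e b)) summable_on E"
    by (rule nonneg_bdd_above_summable_on) (auto intro!: bdd_aboveI fin)
  show "(\<Sum>\<^sub>\<infinity>e\<in>E. cmod (ip a e) * cmod (ip e b)) \<le> norm a * norm b"
    by (rule has_sum_le_finite_sums[OF has_sum_infsum[OF s]]) (auto intro: fin)
qed

lemma hs_adjoint_summable:
  assumes E1: "orthonormal_basis ip E1" and E2: "orthonormal_basis ip E2"
    and hs: "(\<lambda>e. (norm (C e))\<^sup>2) summable_on E1"
    and adj: "\<And>x f. ip (C x) f = ip x (cs f)"
  shows "(\<lambda>f. (norm (cs f))\<^sup>2) summable_on E2"
proof -
  have on2: "orthonormal E2" by (rule onb_orthonormal[OF E2])
  have fin: "(\<Sum>f\<in>F. (norm (cs f))\<^sup>2) \<le> (\<Sum>\<^sub>\<infinity>e\<in>E1. (norm (C e))\<^sup>2)" if F: "finite F" "F \<subseteq> E2" for F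
  proof -
    have eq: "cmod (ip (cs f) e) = cmod (ip (C e) f)" for f e
      by (subst ip_cnj) (simp add: adj)
    have "((\<lambda>e. \<Sum>f\<in>F. (cmod (ip (C e) f))\<^sup>2) has_sum (\<Sum>f\<in>F. (norm (cs f))\<^sup>2)) E1"
      using F(1)
    proof (rule has_sum_finsum)
      fix f assume "f \<in> F"
      show "((\<lambda>e. (cmod (ip (C e) f))\<^sup>2) has_sum (norm (cs f))\<^sup>2) E1"
        using parseval_norm[OF E1, of "cs f"] by (simp only: eq)
    qed
    moreover have "((\<lambda>e. (norm (C e))\<^sup>2) has_sum (\<Sum>\<^sub>\<infinity>e\<in>E1. (norm (C e))\<^sup>2)) E1"
      using hs by simp
    ultimately show ?thesis
      by (rule has_sum_mono) (rule bessel_finite[OF on2 F])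
  qed
  show ?thesis
    by (rule nonneg_bdd_above_summable_on) (auto intro!: bdd_aboveI fin)
qed

end


context chs begin

lemma bop_smul: "bounded_op smul B \<Longrightarrow> B (smul a x) = smul a (B x)"
  unfolding bounded_op_def clinear_op_def by blast

lemma trace_identity:
  assumes E0: "orthonormal_basis ip E0" and EB: "orthonormal_basis ip EB"
    and B: "bounded_op smul B"
    and adj: "\<And>x f. ip (C x) f = ip x (cs f)"
    and VW: "\<And>x e. ip (V x) e = ip x (W e)"
    and normV: "\<And>x. norm (V x) = norm x"
    and sB: "(\<lambda>f. (norm (B f))\<^sup>2) summable_on EB"
    and sC: "(\<lambda>f. (norm (cs f))\<^sup>2) summable_on EB"
  shows "(\<Sum>\<^sub>\<infinity>e\<in>E0. ip (B (C (W e))) e) = (\<Sum>\<^sub>\<infinity>f\<in>EB. ip (B f) (V (cs f)))"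
proof -
  define k where "k e f = ip (B f) e * ip e (V (cs f))" for e f
  have on0: "orthonormal E0" by (rule onb_orthonormal[OF E0])
  have h1: "((\<lambda>f. k e f) has_sum ip (B (C (W e))) e) EB" for e
  proof -
    have bl: "bounded_linear (\<lambda>u. ip (B u) e)"
      by (rule bounded_linear_compose[OF bl_ip1 bounded_op_bl[OF B]])
    have "((\<lambda>f. ip (B (smul (ip (C (W e)) f) f)) e) has_sum ip (B (C (W e))) e) EB"
      by (rule has_sum_bounded_linear[OF bl onb_expansion[OF EB]])
    moreover have "ip (B (smul (ip (C (W e)) f) f)) e = k e f" for f
    proof -
      have "ip (C (W e)) f = cnj (ip (V (cs f)) e)"
        by (simp add: adj VW) (subst ip_cnj, simp)
      also have "\<dots> = ip e (V (cs f))" by (subst (2) ip_cnj) simp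
      finally show ?thesis
        by (simp add: bop_smul[OF B] ip_smul k_def mult.commute)
    qed
    ultimately show ?thesis by simp
  qed
  have h2: "((\<lambda>e. k e f) has_sum ip (B f) (V (cs f))) E0" for f
    unfolding k_def by (rule parseval_ip[OF E0])
  have g_sum: "(\<lambda>f. \<Sum>\<^sub>\<infinity>e\<in>E0. cmod (k e f)) summable_on EB"
  proof (rule summable_on_comparison_test)
    show "(\<lambda>f. ((norm (B f))\<^sup>2 + (norm (cs f))\<^sup>2) / 2) summable_on EB"
      using summable_on_cmult_left[OF summable_on_add[OF sB sC], of "1/2"] by simp
    fix f assume "f \<in> EB"
    show "0 \<le> (\<Sum>\<^sub>\<infinity>e\<in>E0. cmod (k e f))" by (rule infsum_nonneg) simp
    have "(\<Sum>\<^sub>\<infinity>e\<in>E0. cmod (k e f)) = (\<Sum>\<^sub>\<infinity>e\<in>E0. cmod (ip (B f) e) * cmod (ip e (V (cs f))))"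
      by (simp add: k_def norm_mult)
    also have "\<dots> \<le> norm (B f) * norm (V (cs f))" by (rule l2_cs(2)[OF on0])
    also have "\<dots> \<le> ((norm (B f))\<^sup>2 + (norm (cs f))\<^sup>2) / 2"
      using sum_squares_bound[of "norm (B f)" "norm (cs f)"] by (simp add: normV power2_eq_square)
    finally show "(\<Sum>\<^sub>\<infinity>e\<in>E0. cmod (k e f)) \<le> ((norm (B f))\<^sup>2 + (norm (cs f))\<^sup>2) / 2" .
  qed
  have p_sum: "(\<lambda>(f, e). cmod (k e f)) summable_on (EB \<times> E0)"
  proof (rule summable_on_SigmaI[where g="\<lambda>f. \<Sum>\<^sub>\<infinity>e\<in>E0. cmod (k e f)"])
    fix f assume "f \<in> EB"
    have "(\<lambda>e. cmod (k e f)) summable_on E0"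
      using l2_cs(1)[OF on0, of "B f" "V (cs f)"] by (simp add: k_def norm_mult)
    then show "((\<lambda>e. case (f, e) of (f, e) \<Rightarrow> cmod (k e f)) has_sum (\<Sum>\<^sub>\<infinity>e\<in>E0. cmod (k e f))) E0"
      by simp
  qed (use g_sum in auto)
  then have "(\<lambda>(e, f). cmod (k e f)) summable_on (E0 \<times> EB)"
    by (subst summable_on_swap) (simp add: case_prod_unfold)
  then have "(\<lambda>x. norm ((\<lambda>(e, f). k e f) x)) summable_on (E0 \<times> EB)"
    by (simp add: case_prod_unfold)
  then have ks: "(\<lambda>(e, f). k e f) summable_on (E0 \<times> EB)"
    by (rule abs_summable_summable)
  have "(\<Sum>\<^sub>\<infinity>e\<in>E0. ip (B (C (W e))) e) = (\<Sum>\<^sub>\<infinity>e\<in>E0. \<Sum>\<^sub>\<infinity>f\<in>EB. k e f)"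
    by (rule infsum_cong) (simp add: infsumI[OF h1])
  also have "\<dots> = (\<Sum>\<^sub>\<infinity>f\<in>EB. \<Sum>\<^sub>\<infinity>e\<in>E0. k e f)"
    by (rule infsum_swap_banach[OF ks])
  also have "\<dots> = (\<Sum>\<^sub>\<infinity>f\<in>EB. ip (B f) (V (cs f)))"
    by (rule infsum_cong) (simp add: infsumI[OF h2])
  finally show ?thesis .
qed

end


lemma integral_cs:
  fixes X Y :: "'a \<Rightarrow> complex"
  assumes mX[measurable]: "X \<in> borel_measurable M" and mY[measurable]: "Y \<in> borel_measurable M"
    and iX: "integrable M (\<lambda>x. (cmod (X x))\<^sup>2)" and iY: "integrable M (\<lambda>x. (cmod (Y x))\<^sup>2)"
  shows "integrable M (\<lambda>x. X x * Y x)"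
    and "(\<integral>x. cmod (X x * Y x) \<partial>M) \<le> sqrt (\<integral>x. (cmod (X x))\<^sup>2 \<partial>M) * sqrt (\<integral>x. (cmod (Y x))\<^sup>2 \<partial>M)"
proof -
  define a where "a = (\<integral>x. (cmod (X x))\<^sup>2 \<partial>M)"
  define b where "b = (\<integral>x. (cmod (Y x))\<^sup>2 \<partial>M)"
  have a0: "a \<ge> 0" and b0: "b \<ge> 0" unfolding a_def b_def by (auto intro: integral_nonneg)
  have isum: "integrable M (\<lambda>x. ((cmod (X x))\<^sup>2 + (cmod (Y x))\<^sup>2) / 2)"
    using iX iY by auto
  have bnd: "cmod (X x) * cmod (Y x) \<le> ((cmod (X x))\<^sup>2 + (cmod (Y x))\<^sup>2) / 2" for x
    using sum_squares_bound[of "cmod (X x)" "cmod (Y x)"] by (simp add: power2_eq_square)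
  show iXY: "integrable M (\<lambda>x. X x * Y x)"
  proof (rule Bochner_Integration.integrable_bound[OF isum])
    show "AE x in M. norm (X x * Y x) \<le> norm (((cmod (X x))\<^sup>2 + (cmod (Y x))\<^sup>2) / 2)"
    proof (rule AE_I2)
      fix x
      have "norm (X x * Y x) \<le> ((cmod (X x))\<^sup>2 + (cmod (Y x))\<^sup>2) / 2" using bnd[of x] by (simp add: norm_mult)
      also have "\<dots> \<le> norm (((cmod (X x))\<^sup>2 + (cmod (Y x))\<^sup>2) / 2)" by simp
      finally show "norm (X x * Y x) \<le> norm (((cmod (X x))\<^sup>2 + (cmod (Y x))\<^sup>2) / 2)" .
    qed
  qed simp
  have iN: "integrable M (\<lambda>x. cmod (X x * Y x))" using iXY by (rule integrable_norm)
  define r where "r = (\<integral>x. cmod (X x * Y x) \<partial>M)"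
  have r0: "r \<ge> 0" unfolding r_def by simp
  have "(\<integral>\<^sup>+x. ennreal (cmod (X x)) * ennreal (cmod (Y x)) \<partial>M)\<^sup>2
        \<le> (\<integral>\<^sup>+x. (ennreal (cmod (X x)))\<^sup>2 \<partial>M) * (\<integral>\<^sup>+x. (ennreal (cmod (Y x)))\<^sup>2 \<partial>M)"
    by (rule Cauchy_Schwarz_nn_integral) auto
  moreover have "(\<integral>\<^sup>+x. ennreal (cmod (X x)) * ennreal (cmod (Y x)) \<partial>M) = ennreal r"
  proof -
    have "(\<integral>\<^sup>+x. ennreal (cmod (X x)) * ennreal (cmod (Y x)) \<partial>M) = (\<integral>\<^sup>+x. ennreal (cmod (X x * Y x)) \<partial>M)"
      by (simp add: norm_mult ennreal_mult)
    also have "\<dots> = ennreal r" unfolding r_def by (rule nn_integral_eq_integral[OF iN]) simp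
    finally show ?thesis .
  qed
  moreover have "(\<integral>\<^sup>+x. (ennreal (cmod (X x)))\<^sup>2 \<partial>M) = ennreal a"
  proof -
    have "(\<integral>\<^sup>+x. (ennreal (cmod (X x)))\<^sup>2 \<partial>M) = (\<integral>\<^sup>+x. ennreal ((cmod (X x))\<^sup>2) \<partial>M)"
      by (simp add: ennreal_power)
    also have "\<dots> = ennreal a" unfolding a_def by (rule nn_integral_eq_integral[OF iX]) simp
    finally show ?thesis .
  qed
  moreover have "(\<integral>\<^sup>+x. (ennreal (cmod (Y x)))\<^sup>2 \<partial>M) = ennreal b"
  proof -
    have "(\<integral>\<^sup>+x. (ennreal (cmod (Y x)))\<^sup>2 \<partial>M) = (\<integral>\<^sup>+x. ennreal ((cmod (Y x))\<^sup>2) \<partial>M)"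
      by (simp add: ennreal_power)
    also have "\<dots> = ennreal b" unfolding b_def by (rule nn_integral_eq_integral[OF iY]) simp
    finally show ?thesis .
  qed
  ultimately have "ennreal (r\<^sup>2) \<le> ennreal (a * b)"
    using r0 a0 b0 by (simp add: ennreal_power ennreal_mult)
  then have "r\<^sup>2 \<le> a * b" using a0 b0 by simp
  also have "a * b = (sqrt a * sqrt b)\<^sup>2" using a0 b0 by (simp add: power_mult_distrib)
  finally have "r \<le> sqrt a * sqrt b"
    by (rule power2_le_imp_le) (use a0 b0 in simp)
  then show "(\<integral>x. cmod (X x * Y x) \<partial>M) \<le> sqrt (\<integral>x. (cmod (X x))\<^sup>2 \<partial>M) * sqrt (\<integral>x. (cmod (Y x))\<^sup>2 \<partial>M)"
    unfolding r_def a_def b_def .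
qed

lemma has_sum_reidx:
  fixes F :: "'i \<Rightarrow> 'b::topological_comm_monoid_add"
  assumes inj: "inj_on g S" and SI: "S \<subseteq> I" and van: "\<And>i. i \<in> I - S \<Longrightarrow> F i = 0"
  shows "(F has_sum s) I \<longleftrightarrow> ((\<lambda>n::nat. if n \<in> g ` S then F (inv_into S g n) else 0) has_sum s) UNIV"
proof -
  define G where "G n = (if n \<in> g ` S then F (inv_into S g n) else 0)" for n
  have "(F has_sum s) I \<longleftrightarrow> (F has_sum s) S"
    using SI van by (intro has_sum_cong_neutral) auto
  also have "\<dots> \<longleftrightarrow> ((G \<circ> g) has_sum s) S"
    using inj by (intro has_sum_cong) (auto simp: G_def)
  also have "\<dots> \<longleftrightarrow> (G has_sum s) (g ` S)"
    by (rule has_sum_reindex[OF inj, symmetric])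
  also have "\<dots> \<longleftrightarrow> (G has_sum s) UNIV"
    by (intro has_sum_cong_neutral) (auto simp: G_def)
  finally show ?thesis unfolding G_def .
qed

lemma integral_infsum:
  fixes h :: "'i \<Rightarrow> 'a \<Rightarrow> complex" and w :: "'i \<Rightarrow> real"
  assumes int: "\<And>i. i \<in> I \<Longrightarrow> integrable M (h i)"
    and pt: "\<And>i x. i \<in> I \<Longrightarrow> cmod (h i x) \<le> w i"
    and intb: "\<And>i. i \<in> I \<Longrightarrow> (\<integral>x. cmod (h i x) \<partial>M) \<le> w i"
    and ws: "w summable_on I"
  shows "integrable M (\<lambda>x. \<Sum>\<^sub>\<infinity>i\<in>I. h i x)"
    and "(\<integral>x. (\<Sum>\<^sub>\<infinity>i\<in>I. h i x) \<partial>M) = (\<Sum>\<^sub>\<infinity>i\<in>I. (\<integral>x. h i x \<partial>M))"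
proof -
  have w0: "w i \<ge> 0" if "i \<in> I" for i using pt[OF that, of undefined] norm_ge_zero order.trans by blast
  define S where "S = {i\<in>I. w i \<noteq> 0}"
  have cS: "countable S" unfolding S_def by (rule summable_countable_real[OF ws])
  define g where "g = to_nat_on S"
  have inj: "inj_on g S" unfolding g_def using cS by (rule inj_on_to_nat_on)
  have SI: "S \<subseteq> I" unfolding S_def by auto
  have hz: "h i x = 0" if "i \<in> I - S" for i x
    using pt[of i x] that unfolding S_def by auto
  define H where "H n x = (if n \<in> g ` S then h (inv_into S g n) x else 0)" for n x
  have HI: "inv_into S g n \<in> I" if "n \<in> g ` S" for n
    using that SI by (auto simp: inv_into_into)
  have ptsum: "(\<lambda>i. h i x) summable_on I" for x
  proof -
    have "(\<lambda>i. cmod (h i x)) summable_on I"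
      by (rule summable_on_comparison_test[OF ws]) (auto intro: pt)
    then show ?thesis by (rule abs_summable_summable)
  qed
  have Hsums: "(\<lambda>n. H n x) sums (\<Sum>\<^sub>\<infinity>i\<in>I. h i x)" for x
  proof -
    have "((\<lambda>i. h i x) has_sum (\<Sum>\<^sub>\<infinity>i\<in>I. h i x)) I" using ptsum by simp
    then have "((\<lambda>n. H n x) has_sum (\<Sum>\<^sub>\<infinity>i\<in>I. h i x)) UNIV"
      unfolding H_def using has_sum_reidx[OF inj SI, of "\<lambda>i. h i x"] hz by auto
    then show ?thesis by (rule has_sum_imp_sums)
  qed
  have Hnorm: "summable (\<lambda>n. norm (H n x))" for x
  proof -
    have "(\<lambda>i. cmod (h i x)) summable_on I"
      by (rule summable_on_comparison_test[OF ws]) (auto intro: pt)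
    then have "((\<lambda>i. cmod (h i x)) has_sum (\<Sum>\<^sub>\<infinity>i\<in>I. cmod (h i x))) I" by simp
    then have "((\<lambda>n. if n \<in> g ` S then cmod (h (inv_into S g n) x) else 0) has_sum (\<Sum>\<^sub>\<infinity>i\<in>I. cmod (h i x))) UNIV"
      using has_sum_reidx[OF inj SI, of "\<lambda>i. cmod (h i x)"] hz by auto
    then have "(\<lambda>n. if n \<in> g ` S then cmod (h (inv_into S g n) x) else 0) sums (\<Sum>\<^sub>\<infinity>i\<in>I. cmod (h i x))"
      by (rule has_sum_imp_sums)
    then show ?thesis unfolding H_def by (simp add: sums_iff if_distrib cong: if_cong)
  qed
  have Hint: "integrable M (H n)" for n
    unfolding H_def by (cases "n \<in> g ` S") (auto intro: int HI)
  have intnorm0: "(\<integral>x. cmod (h i x) \<partial>M) = 0" if "i \<in> I - S" for i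
    using hz[OF that] by simp
  have intsum: "(\<lambda>i. \<integral>x. cmod (h i x) \<partial>M) summable_on I"
    by (rule summable_on_comparison_test[OF ws]) (auto intro: intb)
  have Hintnorm: "summable (\<lambda>n. \<integral>x. norm (H n x) \<partial>M)"
  proof -
    have "((\<lambda>i. \<integral>x. cmod (h i x) \<partial>M) has_sum (\<Sum>\<^sub>\<infinity>i\<in>I. \<integral>x. cmod (h i x) \<partial>M)) I" using intsum by simp
    then have "((\<lambda>n. if n \<in> g ` S then (\<integral>x. cmod (h (inv_into S g n) x) \<partial>M) else 0) has_sum (\<Sum>\<^sub>\<infinity>i\<in>I. \<integral>x. cmod (h i x) \<partial>M)) UNIV"
      using has_sum_reidx[OF inj SI, of "\<lambda>i. \<integral>x. cmod (h i x) \<partial>M"] intnorm0 by auto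
    then have "summable (\<lambda>n. if n \<in> g ` S then (\<integral>x. cmod (h (inv_into S g n) x) \<partial>M) else 0)"
      using has_sum_imp_sums sums_summable by blast
    moreover have "(\<integral>x. norm (H n x) \<partial>M) = (if n \<in> g ` S then (\<integral>x. cmod (h (inv_into S g n) x) \<partial>M) else 0)" for n
      unfolding H_def by (cases "n \<in> g ` S") auto
    ultimately show ?thesis by simp
  qed
  have eqf: "(\<lambda>x. \<Sum>\<^sub>\<infinity>i\<in>I. h i x) = (\<lambda>x. \<Sum>n. H n x)"
    using Hsums by (auto simp: sums_iff)
  show "integrable M (\<lambda>x. \<Sum>\<^sub>\<infinity>i\<in>I. h i x)"
    unfolding eqf by (rule integrable_suminf[OF Hint AE_I2[OF Hnorm] Hintnorm])
  have "(\<integral>x. (\<Sum>\<^sub>\<infinity>i\<in>I. h i x) \<partial>M) = (\<Sum>n. \<integral>x. H n x \<partial>M)"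
    unfolding eqf by (rule integral_suminf[OF Hint AE_I2[OF Hnorm] Hintnorm])
  also have "\<dots> = (\<Sum>\<^sub>\<infinity>i\<in>I. (\<integral>x. h i x \<partial>M))"
  proof -
    have "(\<lambda>i. norm (\<integral>x. h i x \<partial>M)) summable_on I"
      by (rule summable_on_comparison_test[OF intsum]) (auto intro: integral_norm_bound)
    then have "(\<lambda>i. \<integral>x. h i x \<partial>M) summable_on I" by (rule abs_summable_summable)
    then have "((\<lambda>i. \<integral>x. h i x \<partial>M) has_sum (\<Sum>\<^sub>\<infinity>i\<in>I. (\<integral>x. h i x \<partial>M))) I"
      by simp
    then have "((\<lambda>n. if n \<in> g ` S then (\<integral>x. h (inv_into S g n) x \<partial>M) else 0) has_sum (\<Sum>\<^sub>\<infinity>i\<in>I. (\<integral>x. h i x \<partial>M))) UNIV"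
      using has_sum_reidx[OF inj SI, of "\<lambda>i. \<integral>x. h i x \<partial>M"] hz by auto
    then have "(\<lambda>n. if n \<in> g ` S then (\<integral>x. h (inv_into S g n) x \<partial>M) else 0) sums (\<Sum>\<^sub>\<infinity>i\<in>I. (\<integral>x. h i x \<partial>M))"
      by (rule has_sum_imp_sums)
    moreover have "(\<integral>x. H n x \<partial>M) = (if n \<in> g ` S then (\<integral>x. h (inv_into S g n) x \<partial>M) else 0)" for n
      unfolding H_def by (cases "n \<in> g ` S") auto
    ultimately show ?thesis by (simp add: sums_iff)
  qed
  finally show "(\<integral>x. (\<Sum>\<^sub>\<infinity>i\<in>I. h i x) \<partial>M) = (\<Sum>\<^sub>\<infinity>i\<in>I. (\<integral>x. h i x \<partial>M))" .
qed



context chs begin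
lemma ip_ext2: assumes "\<And>y. ip y x = ip y z" shows "x = z"
proof (rule ip_ext)
  fix y
  have "ip x y = cnj (ip y x)" by (rule ip_cnj)
  also have "\<dots> = cnj (ip y z)" using assms by simp
  also have "\<dots> = ip z y" by (rule ip_cnj[symmetric])
  finally show "ip x y = ip z y" .
qed
end

theorem proposition6p20:
  fixes m :: "'x::{topological_ab_group_add, t2_space} \<Rightarrow> 'x \<Rightarrow> complex"
    and \<mu> \<nu> :: "'x measure"
    and smul :: "complex \<Rightarrow> 'h::banach \<Rightarrow> 'h"
    and ip :: "'h \<Rightarrow> 'h \<Rightarrow> complex"
    and U :: "'x \<Rightarrow> 'h \<Rightarrow> 'h"
    and A :: "'h \<Rightarrow> 'h"
  assumes lcg: "locally_compact_group TYPE('x)"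
    and mult: "multiplier m"
    and heis: "heisenberg m"
    and hilb: "complex_hilbert smul ip"
    and U_unitary: "\<forall>x. unitary_op smul ip (U x)"
    and U_proj: "\<forall>x y. U x \<circ> U y = (\<lambda>v. smul (m x y) (U (x + y) v))"
    and U_cont: "\<forall>\<phi>. continuous_on UNIV (\<lambda>x. U x \<phi>)"
    and U_irred: "\<forall>S. closed_csubspace smul S \<and> (\<forall>x. U x ` S \<subseteq> S) \<longrightarrow> S = {0} \<or> S = UNIV"
    and haar: "haar_measure \<mu>"
    and U_sqint: "\<forall>\<phi> \<psi>. square_integrable \<mu> (\<lambda>x. ip (U x \<phi>) \<psi>)"
    and U_orth: "\<forall>\<phi>1 \<psi>1 \<phi>2 \<psi>2.
        (\<integral>x. ip (U x \<phi>1) \<psi>1 * cnj (ip (U x \<phi>2) \<psi>2) \<partial>\<mu>) = ip \<phi>1 \<phi>2 * cnj (ip \<psi>1 \<psi>2)"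
    and dual_scale: "sets \<nu> = sets borel \<and>
        (\<exists>c>0. \<forall>B\<in>sets borel. emeasure \<nu> B = ennreal c * emeasure \<mu> B)"
    and plancherel: "\<forall>f. integrable \<mu> f \<and> square_integrable \<mu> f \<longrightarrow>
        square_integrable \<nu> (sympl_fourier m \<mu> f) \<and>
        (\<integral>\<xi>. (cmod (sympl_fourier m \<mu> f \<xi>))\<^sup>2 \<partial>\<nu>) = (\<integral>x. (cmod (f x))\<^sup>2 \<partial>\<mu>)"
    and A_tc: "trace_class smul ip A"
    and FA_L1: "integrable \<nu> (fourier_U ip U A)"
  shows "inv_fourier_U ip \<nu> U (fourier_U ip U A) = A"
proof -
  interpret H: chs smul ip by unfold_locales (rule hilb)
  have Ulin: "U x (a + b) = U x a + U x b" for x a b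
    using U_unitary unfolding unitary_op_def clinear_op_def by blast
  have Usm: "U x (smul a v) = smul a (U x v)" for x a v
    using U_unitary unfolding unitary_op_def clinear_op_def by blast
  have Uip: "ip (U x v) (U x w) = ip v w" for x v w
    using U_unitary unfolding unitary_op_def by blast
  have Usurj: "surj (U x)" for x
    using U_unitary unfolding unitary_op_def by blast
  have Unorm: "norm (U x v) = norm v" for x v
  proof -
    have "complex_of_real ((norm (U x v))\<^sup>2) = complex_of_real ((norm v)\<^sup>2)"
      using Uip[of x v v] by (simp only: H.ip_self)
    then have "(norm (U x v))\<^sup>2 = (norm v)\<^sup>2" by (simp only: of_real_eq_iff)
    then show ?thesis by (simp add: power2_eq_iff_nonneg)
  qed
  have Udiff: "U x (a - b) = U x a - U x b" for x a b
    using Ulin[of x "a - b" b] by (simp add: algebra_simps)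
  have Uadj: "ip (U x a) e = ip a (adjoint_op ip (U x) e)" for x a e
  proof -
    obtain z where z: "U x z = e" using surjD[OF Usurj[of x], of e] by auto
    have ex1: "\<exists>!z. \<forall>a. ip (U x a) e = ip a z"
    proof (rule ex1I[of _ z])
      show "\<forall>a. ip (U x a) e = ip a z"
      proof
        fix a show "ip (U x a) e = ip a z" using Uip[of x a z] z by simp
      qed
      fix z' assume z': "\<forall>a. ip (U x a) e = ip a z'"
      have "ip a z' = ip a z" for a using Uip[of x a z] z z' by simp
      then show "z' = z" by (rule H.ip_ext2)
    qed
    have "\<forall>a. ip (U x a) e = ip a (adjoint_op ip (U x) e)"
      unfolding adjoint_op_def by (rule theI'[OF ex1])
    then show ?thesis by blast
  qed
  have Ucont: "continuous_on UNIV (\<lambda>x. ip (U x a) b)" for a b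
    using bounded_linear.continuous_on[OF H.bl_ip1 U_cont[rule_format, of a]] .
  have Ucont2: "continuous_on UNIV (\<lambda>x. ip b (U x a))" for a b
    using bounded_linear.continuous_on[OF H.bl_ip2 U_cont[rule_format, of a]] .
  have sets_mu: "sets \<mu> = sets borel" using haar unfolding haar_measure_def by (rule conjunct1)
  have space_mu: "space \<mu> = UNIV" using sets_eq_imp_space_eq[OF sets_mu] by simp
  have meas: "g \<in> borel_measurable \<mu>" if "continuous_on UNIV g" for g :: "'x \<Rightarrow> complex"
    by (subst measurable_cong_sets[OF sets_mu refl]) (rule borel_measurable_continuous_onI[OF that])
  have measr: "g \<in> borel_measurable \<mu>" if "continuous_on UNIV g" for g :: "'x \<Rightarrow> real"
    by (subst measurable_cong_sets[OF sets_mu refl]) (rule borel_measurable_continuous_onI[OF that])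
  have sqint: "integrable \<mu> (\<lambda>x. (cmod (ip (U x a) b))\<^sup>2)" for a b
    using U_sqint unfolding square_integrable_def by simp
  have cmod_sw: "cmod (ip b (U x a)) = cmod (ip (U x a) b)" for x a b
    by (subst H.ip_cnj) simp
  have sqint2: "integrable \<mu> (\<lambda>x. (cmod (ip b (U x a)))\<^sup>2)" for a b
    using sqint[of a b] by (simp only: cmod_sw)
  have sqval: "(\<integral>x. (cmod (ip (U x a) b))\<^sup>2 \<partial>\<mu>) = (norm a)\<^sup>2 * (norm b)\<^sup>2" for a b
  proof -
    have "(\<integral>x. ip (U x a) b * cnj (ip (U x a) b) \<partial>\<mu>) = ip a a * cnj (ip b b)"
      using U_orth by simp
    then have "(\<integral>x. complex_of_real ((cmod (ip (U x a) b))\<^sup>2) \<partial>\<mu>) = complex_of_real ((norm a)\<^sup>2 * (norm b)\<^sup>2)"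
      by (simp only: H.mult_cnj_self H.ip_self complex_cnj_complex_of_real of_real_mult)
    then have "complex_of_real (\<integral>x. (cmod (ip (U x a) b))\<^sup>2 \<partial>\<mu>) = complex_of_real ((norm a)\<^sup>2 * (norm b)\<^sup>2)"
      by (simp only: integral_complex_of_real)
    then show ?thesis by (simp only: of_real_eq_iff)
  qed
  have sqval2: "(\<integral>x. (cmod (ip b (U x a)))\<^sup>2 \<partial>\<mu>) = (norm a)\<^sup>2 * (norm b)\<^sup>2" for a b
    using sqval[of a b] by (simp only: cmod_sw)
  have m1: "cmod (m x y) = 1" for x y using mult unfolding multiplier_def by blast
  have m00: "m 0 0 = 1" using mult unfolding multiplier_def by simp
  have U0: "U 0 v = v" for v
  proof -
    have "(U 0 \<circ> U 0) v = smul (m 0 0) (U (0 + 0) v)" using U_proj by simp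
    then have "U 0 (U 0 v) = U 0 v" by (simp add: m00)
    then have "U 0 (U 0 v - v) = 0" by (simp add: Udiff)
    then have "norm (U 0 v - v) = 0" using Unorm[of 0 "U 0 v - v"] by simp
    then show ?thesis by simp
  qed
  have comm: "sympl m x \<xi> * ip (U x v) v = ip (U x (U \<xi> v)) (U \<xi> v)" for x \<xi> v
  proof -
    have mn: "m \<xi> x \<noteq> 0" using m1[of \<xi> x] by auto
    have 1: "U x (U \<xi> v) = smul (m x \<xi>) (U (x + \<xi>) v)"
      using fun_cong[OF U_proj[rule_format, of x \<xi>], of v] by simp
    have 2: "U \<xi> (U x v) = smul (m \<xi> x) (U (x + \<xi>) v)"
      using fun_cong[OF U_proj[rule_format, of \<xi> x], of v] by (simp add: add.commute)
    have "U x (U \<xi> v) = smul (m x \<xi> / m \<xi> x) (U \<xi> (U x v))"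
      using mn by (simp add: 1 2 H.smul_smul)
    then have "ip (U x (U \<xi> v)) (U \<xi> v) = (m x \<xi> / m \<xi> x) * ip (U \<xi> (U x v)) (U \<xi> v)"
      by (simp add: H.ip_smul)
    also have "\<dots> = sympl m x \<xi> * ip (U x v) v" by (simp add: Uip sympl_def)
    finally show ?thesis by simp
  qed
  show ?thesis
  proof (cases "\<exists>v::'h. v \<noteq> 0")
    case False
    then have z: "\<And>v::'h. v = 0" by blast
    show ?thesis
    proof
      fix x show "inv_fourier_U ip \<nu> U (fourier_U ip U A) x = A x" using z[of "A x"] z by metis
    qed
  next
    case True
    then obtain \<phi>0 :: 'h where \<phi>0: "\<phi>0 \<noteq> 0" by blast
    define X where "X x = ip (U x \<phi>0) \<phi>0" for x
    define f where "f x = X x * cnj (X x)" for x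
    have Xc: "continuous_on UNIV X" unfolding X_def by (rule Ucont)
    have fc: "continuous_on UNIV f" unfolding f_def using Xc by (intro continuous_intros)
    have Xm: "X \<in> borel_measurable \<mu>" by (rule meas[OF Xc])
    have cXm: "(\<lambda>x. cnj (X x)) \<in> borel_measurable \<mu>" by (rule meas) (use Xc in \<open>intro continuous_intros\<close>)
    have iX: "integrable \<mu> (\<lambda>x. (cmod (X x))\<^sup>2)" unfolding X_def by (rule sqint)
    have icX: "integrable \<mu> (\<lambda>x. (cmod (cnj (X x)))\<^sup>2)" using iX by simp
    have f_int: "integrable \<mu> f" unfolding f_def by (rule integral_cs(1)[OF Xm cXm iX icX])
    have Xb: "cmod (X x) \<le> (norm \<phi>0)\<^sup>2" for x
      using H.cs[of "U x \<phi>0" \<phi>0] unfolding X_def by (simp add: Unorm power2_eq_square)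
    have f_sq: "square_integrable \<mu> f"
      unfolding square_integrable_def
    proof
      show "f \<in> borel_measurable \<mu>" by (rule meas[OF fc])
      show "integrable \<mu> (\<lambda>x. (cmod (f x))\<^sup>2)"
      proof (rule Bochner_Integration.integrable_bound)
        show "integrable \<mu> (\<lambda>x. (norm \<phi>0)^4 * (cmod (X x))\<^sup>2)"
          using iX by (rule integrable_mult_right)
        show "(\<lambda>x. (cmod (f x))\<^sup>2) \<in> borel_measurable \<mu>"
          by (rule measr) (use fc in \<open>intro continuous_intros\<close>)
        show "AE x in \<mu>. norm ((cmod (f x))\<^sup>2) \<le> norm ((norm \<phi>0)^4 * (cmod (X x))\<^sup>2)"
        proof (rule AE_I2)
          fix x
          have "(cmod (f x))\<^sup>2 = (cmod (X x))\<^sup>2 * (cmod (X x))\<^sup>2"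
            by (simp add: f_def norm_mult power2_eq_square)
          also have "\<dots> \<le> ((norm \<phi>0)\<^sup>2)\<^sup>2 * (cmod (X x))\<^sup>2"
            using Xb[of x] by (intro mult_right_mono power_mono) auto
          finally show "norm ((cmod (f x))\<^sup>2) \<le> norm ((norm \<phi>0)^4 * (cmod (X x))\<^sup>2)"
            by (simp add: power_mult_distrib[symmetric] power_mult[symmetric])
        qed
      qed
    qed
    have Ff: "sympl_fourier m \<mu> f = f"
    proof
      fix \<xi>
      have "sympl_fourier m \<mu> f \<xi> = (\<integral>x. ip (U x (U \<xi> \<phi>0)) (U \<xi> \<phi>0) * cnj (ip (U x \<phi>0) \<phi>0) \<partial>\<mu>)"
        unfolding sympl_fourier_def f_def X_def
        by (intro Bochner_Integration.integral_cong refl) (simp add: comm[symmetric] mult.assoc)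
      also have "\<dots> = ip (U \<xi> \<phi>0) \<phi>0 * cnj (ip (U \<xi> \<phi>0) \<phi>0)" using U_orth by simp
      also have "\<dots> = f \<xi>" by (simp add: f_def X_def)
      finally show "sympl_fourier m \<mu> f \<xi> = f \<xi>" .
    qed
    define q where "q x = (cmod (f x))\<^sup>2" for x
    have qc: "continuous_on UNIV q" unfolding q_def using fc by (intro continuous_intros)
    have plq: "(\<integral>\<xi>. q \<xi> \<partial>\<nu>) = (\<integral>x. q x \<partial>\<mu>)"
      using conjunct2[OF plancherel[rule_format, OF conjI[OF f_int f_sq]]] unfolding Ff q_def .
    from dual_scale obtain c where c: "c > 0" "\<And>B. B \<in> sets borel \<Longrightarrow> emeasure \<nu> B = ennreal c * emeasure \<mu> B"
      and sets_nu: "sets \<nu> = sets borel" by blast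
    have nu_dens: "\<nu> = density \<mu> (\<lambda>_. ennreal c)"
    proof (rule measure_eqI)
      show "sets \<nu> = sets (density \<mu> (\<lambda>_. ennreal c))" by (simp add: sets_nu sets_mu)
      fix B assume B: "B \<in> sets \<nu>"
      then have Bm: "B \<in> sets \<mu>" using sets_nu sets_mu by simp
      have "emeasure (density \<mu> (\<lambda>_. ennreal c)) B = (\<integral>\<^sup>+x. ennreal c * indicator B x \<partial>\<mu>)"
        by (rule emeasure_density[OF _ Bm]) simp
      also have "\<dots> = ennreal c * emeasure \<mu> B" by (rule nn_integral_cmult_indicator[OF Bm])
      finally show "emeasure \<nu> B = emeasure (density \<mu> (\<lambda>_. ennreal c)) B"
        using c(2)[of B] B sets_nu by simp
    qed
    have qm: "q \<in> borel_measurable \<mu>" by (rule measr[OF qc])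
    have "(\<integral>\<xi>. q \<xi> \<partial>\<nu>) = (\<integral>x. c *\<^sub>R q x \<partial>\<mu>)"
      unfolding nu_dens by (rule integral_density[OF qm]) (use c in auto)
    then have cq: "c * (\<integral>x. q x \<partial>\<mu>) = (\<integral>x. q x \<partial>\<mu>)" using plq by simp
    have qint: "integrable \<mu> q" using f_sq unfolding square_integrable_def q_def by simp
    have Ipos: "(\<integral>x. q x \<partial>\<mu>) \<noteq> 0"
    proof
      assume I0: "(\<integral>x. q x \<partial>\<mu>) = 0"
      have nn: "AE x in \<mu>. 0 \<le> q x" by (simp add: q_def)
      have ae: "AE x in \<mu>. q x = 0"
        using integral_nonneg_eq_0_iff_AE[OF qint nn] I0 by simp
      define V where "V = q -` (- {0})"
      have "\<forall>B. open B \<longrightarrow> open (q -` B)" using qc continuous_on_open_vimage[of UNIV q] by simp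
      then have Vo: "open V" unfolding V_def by (simp add: open_Compl)
      have "X 0 = complex_of_real ((norm \<phi>0)\<^sup>2)" by (simp add: X_def U0 H.ip_self)
      then have "q 0 \<noteq> 0" using \<phi>0 by (simp add: q_def f_def norm_mult)
      then have "V \<noteq> {}" unfolding V_def by auto
      have "\<forall>V. open V \<longrightarrow> V \<noteq> {} \<longrightarrow> emeasure \<mu> V > 0"
        using haar unfolding haar_measure_def by (elim conjE) assumption
      then have pos: "emeasure \<mu> V > 0" using Vo \<open>V \<noteq> {}\<close> by simp
      have Vs: "V \<in> sets \<mu>" using Vo sets_mu by simp
      have "{x \<in> space \<mu>. \<not> q x = 0} = V" unfolding V_def space_mu by auto
      then have "emeasure \<mu> V = 0" using AE_iff_measurable[OF Vs] ae by simp
      then show False using pos by simp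
    qed
    have c1: "c = 1" using cq Ipos by simp
    have nu_mu: "\<nu> = \<mu>"
    proof (rule measure_eqI)
      show "sets \<nu> = sets \<mu>" by (simp add: sets_nu sets_mu)
      fix B assume "B \<in> sets \<nu>"
      then show "emeasure \<nu> B = emeasure \<mu> B" using c(2)[of B] sets_nu c1 by simp
    qed
    obtain B C where hsB: "hilbert_schmidt smul ip B" and hsC: "hilbert_schmidt smul ip C"
      and ABC: "A = B \<circ> C" using A_tc unfolding trace_class_def by blast
    have Bb: "bounded_op smul B" using hsB unfolding hilbert_schmidt_def by simp
    have Cb: "bounded_op smul C" using hsC unfolding hilbert_schmidt_def by simp
    obtain EB where EB: "orthonormal_basis ip EB" and sB: "(\<lambda>e. (norm (B e))\<^sup>2) summable_on EB"
      using hsB unfolding hilbert_schmidt_def by blast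
    obtain EC where EC: "orthonormal_basis ip EC" and sC0: "(\<lambda>e. (norm (C e))\<^sup>2) summable_on EC"
      using hsC unfolding hilbert_schmidt_def by blast
    define E0 where "E0 = (SOME E. orthonormal_basis ip E)"
    have E0: "orthonormal_basis ip E0" unfolding E0_def using EB by (rule someI)
    define cs where "cs f = (SOME z. \<forall>x. ip (C x) f = ip x z)" for f
    have adj: "ip (C x) f = ip x (cs f)" for x f
    proof -
      have "\<forall>x. ip (C x) f = ip x (cs f)"
        unfolding cs_def by (rule someI_ex[OF H.adjoint_exists[OF EB Cb]])
      then show ?thesis by blast
    qed
    have sC: "(\<lambda>f. (norm (cs f))\<^sup>2) summable_on EB"
      by (rule H.hs_adjoint_summable[OF EC EB sC0 adj])
    have Fexp: "fourier_U ip U A \<xi> = (\<Sum>\<^sub>\<infinity>f\<in>EB. ip (B f) (U \<xi> (cs f)))" for \<xi>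
    proof -
      have "fourier_U ip U A \<xi> = (\<Sum>\<^sub>\<infinity>e\<in>E0. ip (B (C (adjoint_op ip (U \<xi>) e))) e)"
        unfolding fourier_U_def trace_op_def E0_def[symmetric] ABC by simp
      also have "\<dots> = (\<Sum>\<^sub>\<infinity>f\<in>EB. ip (B f) (U \<xi> (cs f)))"
        by (rule H.trace_identity[OF E0 EB Bb adj Uadj Unorm sB sC])
      finally show ?thesis .
    qed
    have key: "ip (A \<phi>) \<psi> = (\<integral>\<xi>. fourier_U ip U A \<xi> * ip (U \<xi> \<phi>) \<psi> \<partial>\<nu>)" for \<phi> \<psi>
    proof -
      define h where "h f \<xi> = ip (B f) (U \<xi> (cs f)) * ip (U \<xi> \<phi>) \<psi>" for f \<xi>
      define w where "w f = norm (B f) * norm (cs f) * (norm \<phi> * norm \<psi>)" for f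
      have integrand: "(\<lambda>\<xi>. fourier_U ip U A \<xi> * ip (U \<xi> \<phi>) \<psi>) = (\<lambda>\<xi>. \<Sum>\<^sub>\<infinity>f\<in>EB. h f \<xi>)"
        by (rule ext) (simp add: Fexp h_def infsum_cmult_left')
      have hint: "integrable \<mu> (h f)" for f
        unfolding h_def
        by (rule integral_cs(1)[OF meas[OF Ucont2] meas[OF Ucont] sqint2 sqint])
      have hpt: "cmod (h f \<xi>) \<le> w f" for f \<xi>
      proof -
        have "cmod (h f \<xi>) = cmod (ip (B f) (U \<xi> (cs f))) * cmod (ip (U \<xi> \<phi>) \<psi>)"
          by (simp add: h_def norm_mult)
        also have "\<dots> \<le> (norm (B f) * norm (cs f)) * (norm \<phi> * norm \<psi>)"
          using H.cs[of "B f" "U \<xi> (cs f)"] H.cs[of "U \<xi> \<phi>" \<psi>]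
          by (intro mult_mono) (auto simp: Unorm)
        finally show ?thesis by (simp add: w_def)
      qed
      have hintb: "(\<integral>\<xi>. cmod (h f \<xi>) \<partial>\<mu>) \<le> w f" for f
      proof -
        have "(\<integral>\<xi>. cmod (h f \<xi>) \<partial>\<mu>) \<le> sqrt (\<integral>\<xi>. (cmod (ip (B f) (U \<xi> (cs f))))\<^sup>2 \<partial>\<mu>) * sqrt (\<integral>\<xi>. (cmod (ip (U \<xi> \<phi>) \<psi>))\<^sup>2 \<partial>\<mu>)"
          unfolding h_def by (rule integral_cs(2)[OF meas[OF Ucont2] meas[OF Ucont] sqint2 sqint])
        also have "\<dots> = w f"
          by (simp add: sqval sqval2 w_def real_sqrt_mult mult_ac)
        finally show ?thesis .
      qed
      have ws: "w summable_on EB"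
      proof -
        have "(\<lambda>f. ((norm (B f))\<^sup>2 + (norm (cs f))\<^sup>2) * (1/2) * (norm \<phi> * norm \<psi>)) summable_on EB"
          by (intro summable_on_cmult_left summable_on_add sB sC)
        then show ?thesis
        proof (rule summable_on_comparison_test)
          fix f
          have "norm (B f) * norm (cs f) \<le> ((norm (B f))\<^sup>2 + (norm (cs f))\<^sup>2) * (1/2)"
            using sum_squares_bound[of "norm (B f)" "norm (cs f)"] by (simp add: power2_eq_square)
          then show "w f \<le> ((norm (B f))\<^sup>2 + (norm (cs f))\<^sup>2) * (1/2) * (norm \<phi> * norm \<psi>)"
            unfolding w_def by (intro mult_right_mono) auto
          show "0 \<le> w f" unfolding w_def by simp
        qed
      qed
      have hval: "(\<integral>\<xi>. h f \<xi> \<partial>\<mu>) = ip (C \<phi>) f * ip (B f) \<psi>" for f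
      proof -
        have "(\<integral>\<xi>. h f \<xi> \<partial>\<mu>) = (\<integral>\<xi>. ip (U \<xi> \<phi>) \<psi> * cnj (ip (U \<xi> (cs f)) (B f)) \<partial>\<mu>)"
          unfolding h_def by (intro Bochner_Integration.integral_cong refl) (subst (2) H.ip_cnj, simp add: mult.commute)
        also have "\<dots> = ip \<phi> (cs f) * cnj (ip \<psi> (B f))" using U_orth by simp
        also have "\<dots> = ip (C \<phi>) f * ip (B f) \<psi>" by (simp add: adj) (subst (2) H.ip_cnj, simp)
        finally show ?thesis .
      qed
      have "(\<integral>\<xi>. fourier_U ip U A \<xi> * ip (U \<xi> \<phi>) \<psi> \<partial>\<nu>) = (\<integral>\<xi>. (\<Sum>\<^sub>\<infinity>f\<in>EB. h f \<xi>) \<partial>\<mu>)"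
        unfolding nu_mu integrand ..
      also have "\<dots> = (\<Sum>\<^sub>\<infinity>f\<in>EB. (\<integral>\<xi>. h f \<xi> \<partial>\<mu>))"
        by (rule integral_infsum(2)[OF hint hpt hintb ws])
      also have "\<dots> = (\<Sum>\<^sub>\<infinity>f\<in>EB. ip (C \<phi>) f * ip (B f) \<psi>)" by (simp add: hval)
      also have "\<dots> = ip (B (C \<phi>)) \<psi>"
      proof (rule infsumI)
        have bl: "bounded_linear (\<lambda>u. ip (B u) \<psi>)"
          by (rule bounded_linear_compose[OF H.bl_ip1 H.bounded_op_bl[OF Bb]])
        have "((\<lambda>f. ip (B (smul (ip (C \<phi>) f) f)) \<psi>) has_sum ip (B (C \<phi>)) \<psi>) EB"
          by (rule has_sum_bounded_linear[OF bl H.onb_expansion[OF EB]])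
        then show "((\<lambda>f. ip (C \<phi>) f * ip (B f) \<psi>) has_sum ip (B (C \<phi>)) \<psi>) EB"
          by (simp add: H.bop_smul[OF Bb] H.ip_smul)
      qed
      finally show ?thesis by (simp add: ABC)
    qed
    show ?thesis
    proof
      fix \<phi>
      show "inv_fourier_U ip \<nu> U (fourier_U ip U A) \<phi> = A \<phi>"
        unfolding inv_fourier_U_def
      proof (rule the_equality)
        show "\<forall>\<psi>. ip (A \<phi>) \<psi> = (\<integral>\<xi>. fourier_U ip U A \<xi> * ip (U \<xi> \<phi>) \<psi> \<partial>\<nu>)" using key by blast
        fix v assume "\<forall>\<psi>. ip v \<psi> = (\<integral>\<xi>. fourier_U ip U A \<xi> * ip (U \<xi> \<phi>) \<psi> \<partial>\<nu>)"
        then have "ip v \<psi> = ip (A \<phi>) \<psi>" for \<psi> using key by simp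
        then show "v = A \<phi>" by (rule H.ip_ext)
      qed
    qed
  qed
qed


end
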